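(* Let $(X,\mathcal{A},\mu)$ be a probability space and $f:X\to X$ a measurable map with $f\mu=\mu$. Consider the nonautonomous system with $X_n=X$, $f_n=f$, $\mu_n=\mu$ for all $n$, and let $\mathcal{F}$ be the set of all constant sequences $\mathcal{P}_n\equiv\mathcal{P}$ of finite measurable partitions $\mathcal{P}$ of $X$. Then $h_{\mathcal{E}(\mathcal{F})}(f_{1,\infty})=h_\mu(f)$, where $h_\mu(f)$ is the classical Kolmogorov–Sinai entropy.
   Context: For a sequence $\{\mathcal{P}_n\}$ of finite measurable partitions, $h(f_{1,\infty};\mathcal{P}_{1,\infty})=\limsup_n\frac1nH_{\mu}(\bigvee_{i=0}^{n-1}f^{-i}\mathcal{P}_{i+1})$, $H_\mu(\mathcal{P})=-\sum_P\mu(P)\log\mu(P)$; $h_{\mathcal{E}}(f_{1,\infty})=\sup_{\mathcal{P}_{1,\infty}\in\mathcal{E}}h(f_{1,\infty};\mathcal{P}_{1,\infty})$. An admissible class is a nonempty class $\mathcal{E}$ of sequences of finite measurable partitions such that (A) each member has uniformly bounded cardinalities; (B) it is closed under passing to termwise coarser sequences; (C) $\mathcal{P}_{1,\infty}\in\mathcal{E}$, $m\ge1$ imply $\{\bigvee_{i=0}^{m-1}f_k^{-i}\mathcal{P}_{k+i}\}_{k\ge1}\in\mathcal{E}$ where $f_k^{-i}$ is the preimage under $f_{k+i-1}\circ\cdots\circ f_k$. $\mathcal{E}(\mathcal{F})$ is the smallest admissible class containing $\mathcal{F}$ (the intersection of all admissible classes containing $\mathcal{F}$). *)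

theory Defs
  imports "HOL-Probability.Probability"
begin

text \<open>Finite measurable partitions of the space of M (empty cells are harmless
  for entropy and are allowed).\<close>
definition fmpart :: "'a measure \<Rightarrow> 'a set set \<Rightarrow> bool" where
  "fmpart M P \<longleftrightarrow> finite P \<and> P \<subseteq> sets M \<and> disjoint P \<and> \<Union>P = space M"

definition part_entropy :: "'a measure \<Rightarrow> 'a set set \<Rightarrow> real" where
  "part_entropy M P = - (\<Sum>A\<in>P. measure M A * ln (measure M A))"

definition part_pre :: "'a measure \<Rightarrow> ('a \<Rightarrow> 'a) \<Rightarrow> 'a set set \<Rightarrow> 'a set set" where
  "part_pre M g P = {g -` A \<inter> space M | A. A \<in> P}"

definition part_join :: "'a set set \<Rightarrow> 'a set set \<Rightarrow> 'a set set" where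
  "part_join P Q = {A \<inter> B | A B. A \<in> P \<and> B \<in> Q}"

fun join_upto :: "'a measure \<Rightarrow> nat \<Rightarrow> (nat \<Rightarrow> 'a set set) \<Rightarrow> 'a set set" where
  "join_upto M 0 Q = {space M}"
| "join_upto M (Suc n) Q = part_join (join_upto M n Q) (Q n)"

text \<open>Sequences are 0-indexed: fs k stands for f_{k+1}, Ps k for P_{k+1}.
  compo fs k i = fs (k+i-1) o ... o fs k (identity for i = 0).\<close>
fun compo :: "(nat \<Rightarrow> 'a \<Rightarrow> 'a) \<Rightarrow> nat \<Rightarrow> nat \<Rightarrow> 'a \<Rightarrow> 'a" where
  "compo fs k 0 = id"
| "compo fs k (Suc i) = fs (k + i) \<circ> compo fs k i"

definition dyn_join :: "'a measure \<Rightarrow> (nat \<Rightarrow> 'a \<Rightarrow> 'a) \<Rightarrow> (nat \<Rightarrow> 'a set set) \<Rightarrow> nat \<Rightarrow> nat \<Rightarrow> 'a set set" where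
  "dyn_join M fs Ps k n = join_upto M n (\<lambda>i. part_pre M (compo fs k i) (Ps (k + i)))"

definition na_entropy_seq :: "'a measure \<Rightarrow> (nat \<Rightarrow> 'a \<Rightarrow> 'a) \<Rightarrow> (nat \<Rightarrow> 'a set set) \<Rightarrow> ereal" where
  "na_entropy_seq M fs Ps =
     limsup (\<lambda>n. ereal (part_entropy M (dyn_join M fs Ps 0 n) / real n))"

definition na_entropy_class :: "'a measure \<Rightarrow> (nat \<Rightarrow> 'a \<Rightarrow> 'a) \<Rightarrow> (nat \<Rightarrow> 'a set set) set \<Rightarrow> ereal" where
  "na_entropy_class M fs E = (SUP Ps\<in>E. na_entropy_seq M fs Ps)"

definition coarser :: "'a set set \<Rightarrow> 'a set set \<Rightarrow> bool" where
  "coarser Q P \<longleftrightarrow> (\<forall>A\<in>P. \<exists>B\<in>Q. A \<subseteq> B)"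

definition admissible :: "'a measure \<Rightarrow> (nat \<Rightarrow> 'a \<Rightarrow> 'a) \<Rightarrow> (nat \<Rightarrow> 'a set set) set \<Rightarrow> bool" where
  "admissible M fs E \<longleftrightarrow>
     E \<noteq> {} \<and>
     (\<forall>Ps\<in>E. \<forall>n. fmpart M (Ps n)) \<and>
     (\<forall>Ps\<in>E. \<exists>B::nat. \<forall>n. card (Ps n) \<le> B) \<and>
     (\<forall>Ps\<in>E. \<forall>Qs. (\<forall>n. fmpart M (Qs n) \<and> coarser (Qs n) (Ps n)) \<longrightarrow> Qs \<in> E) \<and>
     (\<forall>Ps\<in>E. \<forall>m\<ge>1. (\<lambda>k. dyn_join M fs Ps k m) \<in> E)"

definition gen_class :: "'a measure \<Rightarrow> (nat \<Rightarrow> 'a \<Rightarrow> 'a) \<Rightarrow> (nat \<Rightarrow> 'a set set) set \<Rightarrow> (nat \<Rightarrow> 'a set set) set" where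
  "gen_class M fs F = \<Inter>{E. admissible M fs E \<and> F \<subseteq> E}"

definition ks_entropy_part :: "'a measure \<Rightarrow> ('a \<Rightarrow> 'a) \<Rightarrow> 'a set set \<Rightarrow> real" where
  "ks_entropy_part M f P =
     lim (\<lambda>n. part_entropy M (join_upto M n (\<lambda>i. part_pre M (f ^^ i) P)) / real n)"

definition ks_entropy :: "'a measure \<Rightarrow> ('a \<Rightarrow> 'a) \<Rightarrow> ereal" where
  "ks_entropy M f = (SUP P\<in>{P. fmpart M P}. ereal (ks_entropy_part M f P))"

end

theory Submission
  imports Defs
begin



lemma fekete_aux:
  fixes a :: "nat \<Rightarrow> real"
  assumes sub: "\<And>n m. a (n+m) \<le> a n + a m"
  shows "a (q*k + r) \<le> real q * a k + a r"
proof (induction q)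
  case 0 then show ?case by simp
next
  case (Suc q)
  have "a (Suc q * k + r) = a (k + (q*k + r))" by (simp add: algebra_simps)
  also have "\<dots> \<le> a k + a (q*k+r)" by (rule sub)
  also have "\<dots> \<le> a k + (real q * a k + a r)" using Suc by simp
  finally show ?case by (simp add: algebra_simps)
qed

lemma fekete:
  fixes a :: "nat \<Rightarrow> real"
  assumes nn: "\<And>n. a n \<ge> 0" and sub: "\<And>n m. a (n+m) \<le> a n + a m"
  shows "convergent (\<lambda>n. a n / real n)"
proof -
  define S where "S = (\<lambda>n. a n / real n) ` {1..}"
  define L where "L = Inf S"
  have Sne: "S \<noteq> {}" unfolding S_def by auto
  have bdd: "bdd_below S" unfolding S_def using nn by (intro bdd_belowI[of _ 0]) auto
  have lower: "L \<le> a n / real n" if "n \<ge> 1" for n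
    unfolding L_def using bdd that by (intro cInf_lower) (auto simp: S_def)
  have "(\<lambda>n. a n / real n) \<longlonglongrightarrow> L"
  proof (rule LIMSEQ_I)
    fix e :: real assume e: "e > 0"
    have "Inf S < L + e/2" using e L_def by simp
    then obtain k where k: "k \<ge> 1" "a k / real k < L + e/2"
      using cInf_less_iff[OF Sne bdd] unfolding S_def by auto
    define C where "C = (\<Sum>r<k. a r)"
    have C: "a r \<le> C" if "r < k" for r
      unfolding C_def using that nn by (intro member_le_sum) auto
    have C0: "C \<ge> 0" unfolding C_def using nn by (simp add: sum_nonneg)
    obtain N0 :: nat where N0: "real N0 > 2*C/e" using reals_Archimedean2 by blast
    define N where "N = max 1 N0"
    show "\<exists>N. \<forall>n\<ge>N. norm (a n / real n - L) < e"
    proof (intro exI allI impI)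
      fix n assume n: "n \<ge> N"
      have n1: "n \<ge> 1" and nN0: "real n \<ge> real N0" using n by (auto simp: N_def)
      define q where "q = n div k"
      define r where "r = n mod k"
      have nq: "n = q*k + r" by (simp add: q_def r_def)
      have rk: "r < k" using k by (simp add: r_def)
      have an: "a n \<le> real q * a k + C" using fekete_aux[OF sub, of q k r] nq C[OF rk] by simp
      have npos: "real n > 0" using n1 by simp
      have qk: "real q * real k \<le> real n" using nq by (metis le_add1 of_nat_le_iff of_nat_mult)
      have "real q * a k / real n = (real q * real k / real n) * (a k / real k)" using k by (simp add: field_simps)
      also have "\<dots> \<le> 1 * (a k / real k)"
        using qk npos nn[of k] by (intro mult_right_mono) (auto simp: divide_le_eq)
      finally have t1: "real q * a k / real n \<le> a k / real k" by simp
      have "e/2 * real N0 \<le> e/2 * real n" using nN0 e by (intro mult_left_mono) auto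
      moreover have "C < e/2 * real N0" using N0 e by (simp add: field_simps)
      ultimately have "C < e/2 * real n" by linarith
      then have t2: "C / real n < e/2" using npos by (simp add: field_simps)
      have "a n / real n \<le> real q * a k / real n + C / real n" unfolding add_divide_distrib[symmetric] using an npos by (intro divide_right_mono) auto
      then have "a n / real n < L + e" using t1 t2 k by linarith
      moreover have "L \<le> a n / real n" using lower n1 by simp
      ultimately show "norm (a n / real n - L) < e" using e by simp
    qed
  qed
  then show ?thesis by (rule convergentI)
qed




lemma xlnx_mono: "0 \<le> (p::real) \<Longrightarrow> p \<le> a \<Longrightarrow> p * ln p \<le> p * ln a"
  by (cases "p = 0") (auto intro!: mult_left_mono)

lemma xlnx_join: 
  fixes p a b :: real
  assumes "0 \<le> p" "p \<le> a" "p \<le> b"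
  shows "- (p * ln p) \<le> - (p * ln a) - (p * ln b) + a * b - p"
proof (cases "p = 0")
  case True then show ?thesis using assms by simp
next
  case False
  then have pp: "p > 0" "a > 0" "b > 0" using assms by auto
  have "ln (a*b/p) \<le> a*b/p - 1" using pp by (intro ln_le_minus_one) auto
  then have "p * ln (a*b/p) \<le> p * (a*b/p - 1)" using pp by (intro mult_left_mono) auto
  moreover have "ln (a*b/p) = ln a + ln b - ln p" using pp by (simp add: ln_mult ln_div)
  ultimately show ?thesis using pp by (simp add: algebra_simps)
qed

lemma part_join_image: "part_join P Q = (\<lambda>(A,B). A \<inter> B) ` (P \<times> Q)"
  unfolding part_join_def by auto

context
  fixes M :: "'a measure"
  assumes ps: "prob_space M"
begin

interpretation P: prob_space M by (rule ps)

lemma fmpart_sub: "fmpart M P \<Longrightarrow> A \<in> P \<Longrightarrow> A \<subseteq> space M"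
  unfolding fmpart_def by auto

lemma fmpart_sets: "fmpart M P \<Longrightarrow> A \<in> P \<Longrightarrow> A \<in> sets M"
  unfolding fmpart_def by auto

lemma fmpart_disj: "fmpart M P \<Longrightarrow> A \<in> P \<Longrightarrow> B \<in> P \<Longrightarrow> A \<noteq> B \<Longrightarrow> A \<inter> B = {}"
  unfolding fmpart_def disjoint_def by auto

lemma measure_cells:
  assumes P: "fmpart M P" and C: "C \<in> sets M"
  shows "measure M C = (\<Sum>A\<in>P. measure M (C \<inter> A))"
proof -
  have "C = (\<Union>A\<in>P. C \<inter> A)" using P C sets.sets_into_space[OF C] unfolding fmpart_def by auto
  then have "measure M C = measure M (\<Union>A\<in>P. C \<inter> A)" by simp
  also have "\<dots> = (\<Sum>A\<in>P. measure M (C \<inter> A))"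
    using P C fmpart_disj[OF P]
    by (intro P.finite_measure_finite_Union) (auto simp: fmpart_def disjoint_family_on_def)
  finally show ?thesis .
qed

lemma measure_cells_1:
  assumes P: "fmpart M P" shows "(\<Sum>A\<in>P. measure M A) = 1"
proof -
  have "1 = measure M (space M)" by (simp add: P.prob_space)
  also have "\<dots> = (\<Sum>A\<in>P. measure M (space M \<inter> A))" by (rule measure_cells[OF P]) simp
  also have "\<dots> = (\<Sum>A\<in>P. measure M A)" by (auto intro!: sum.cong simp: Int_absorb1 fmpart_sub[OF P])
  finally show ?thesis by simp
qed

lemma entropy_nonneg: "part_entropy M P \<ge> 0"
proof -
  have "measure M A * ln (measure M A) \<le> 0" for A
  proof (cases "measure M A = 0")
    case False
    then have "measure M A > 0" by (simp add: zero_less_measure_iff)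
    moreover have "measure M A \<le> 1" by (rule P.prob_le_1)
    ultimately show ?thesis by (simp add: mult_nonneg_nonpos)
  qed simp
  then show ?thesis unfolding part_entropy_def by (simp add: sum_nonpos)
qed

lemma entropy_mono:
  assumes P: "fmpart M P" and R: "fmpart M R" and c: "coarser P R"
  shows "part_entropy M P \<le> part_entropy M R"
proof -
  let ?p = "\<lambda>A B. measure M (A \<inter> B)"
  have "(\<Sum>A\<in>P. \<Sum>B\<in>R. ?p A B * ln (?p A B)) \<le> (\<Sum>A\<in>P. measure M A * ln (measure M A))"
  proof (rule sum_mono)
    fix A assume A: "A \<in> P"
    have eq: "measure M A = (\<Sum>B\<in>R. ?p A B)" using measure_cells[OF R fmpart_sets[OF P A]] .
    have "(\<Sum>B\<in>R. ?p A B * ln (?p A B)) \<le> (\<Sum>B\<in>R. ?p A B * ln (measure M A))"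
      by (intro sum_mono xlnx_mono) (auto intro!: P.finite_measure_mono fmpart_sets[OF P A])
    also have "\<dots> = measure M A * ln (measure M A)" by (subst (2) eq) (simp add: sum_distrib_right)
    finally show "(\<Sum>B\<in>R. ?p A B * ln (?p A B)) \<le> measure M A * ln (measure M A)" .
  qed
  moreover have "(\<Sum>A\<in>P. \<Sum>B\<in>R. ?p A B * ln (?p A B)) = (\<Sum>B\<in>R. measure M B * ln (measure M B))"
  proof -
    have "(\<Sum>A\<in>P. \<Sum>B\<in>R. ?p A B * ln (?p A B)) = (\<Sum>B\<in>R. \<Sum>A\<in>P. ?p A B * ln (?p A B))"
      by (rule sum.swap)
    also have "\<dots> = (\<Sum>B\<in>R. measure M B * ln (measure M B))"
    proof (rule sum.cong[OF refl])
      fix B assume B: "B \<in> R"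
      then obtain A0 where A0: "A0 \<in> P" "B \<subseteq> A0" using c unfolding coarser_def by auto
      have "(\<Sum>A\<in>P. ?p A B * ln (?p A B)) = ?p A0 B * ln (?p A0 B) + (\<Sum>A\<in>P - {A0}. ?p A B * ln (?p A B))"
        using A0 P by (simp add: sum.remove fmpart_def)
      also have "(\<Sum>A\<in>P - {A0}. ?p A B * ln (?p A B)) = 0"
      proof (rule sum.neutral, intro ballI)
        fix A assume "A \<in> P - {A0}"
        then have "A \<inter> A0 = {}" using fmpart_disj[OF P _ A0(1)] by auto
        then have "A \<inter> B = {}" using A0 by auto
        then show "?p A B * ln (?p A B) = 0" by simp
      qed
      also have "A0 \<inter> B = B" using A0 by auto
      finally show "(\<Sum>A\<in>P. ?p A B * ln (?p A B)) = measure M B * ln (measure M B)" by simp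
    qed
    finally show ?thesis .
  qed
  ultimately show ?thesis unfolding part_entropy_def by simp
qed


lemma fmpart_join:
  assumes P: "fmpart M P" and Q: "fmpart M Q" shows "fmpart M (part_join P Q)"
proof -
  have "finite (part_join P Q)" using P Q unfolding part_join_image fmpart_def by auto
  moreover have "part_join P Q \<subseteq> sets M" using fmpart_sets[OF P] fmpart_sets[OF Q]
    unfolding part_join_def by auto
  moreover have "disjoint (part_join P Q)"
    unfolding disjoint_def part_join_def using fmpart_disj[OF P] fmpart_disj[OF Q] by blast
  moreover have "\<Union>(part_join P Q) = space M"
    using P Q unfolding part_join_def fmpart_def by blast
  ultimately show ?thesis unfolding fmpart_def by blast
qed

lemma entropy_join:
  assumes P: "fmpart M P" and Q: "fmpart M Q"
  shows "part_entropy M (part_join P Q) \<le> part_entropy M P + part_entropy M Q"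
proof -
  let ?p = "\<lambda>A B. measure M (A \<inter> B)"
  let ?g = "\<lambda>C. measure M C * ln (measure M C)"
  have fin: "finite P" "finite Q" using P Q by (auto simp: fmpart_def)
  have "(\<Sum>C\<in>part_join P Q. ?g C) = (\<Sum>(A,B)\<in>P\<times>Q. ?g (A \<inter> B))"
    unfolding part_join_image
  proof (subst sum.reindex_nontrivial)
    show "finite (P \<times> Q)" using fin by simp
  next
    fix x y assume xy: "x \<in> P \<times> Q" "y \<in> P \<times> Q" "x \<noteq> y" "(\<lambda>(A,B). A \<inter> B) x = (\<lambda>(A,B). A \<inter> B) y"
    obtain A B where x: "x = (A,B)" by force
    obtain A' B' where y: "y = (A',B')" by force
    have "A \<inter> B = {}"
    proof (cases "A = A'")
      case True
      then have "B \<noteq> B'" using xy x y by auto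
      then have "B \<inter> B' = {}" using fmpart_disj[OF Q] xy x y by auto
      then show ?thesis using xy x y by auto
    next
      case False
      then have "A \<inter> A' = {}" using fmpart_disj[OF P] xy x y by auto
      then show ?thesis using xy x y by auto
    qed
    then show "?g ((\<lambda>(A,B). A \<inter> B) x) = 0" using x by simp
  qed (simp add: case_prod_unfold comp_def)
  also have "\<dots> = (\<Sum>A\<in>P. \<Sum>B\<in>Q. ?g (A \<inter> B))" by (simp add: sum.cartesian_product)
  finally have j: "part_entropy M (part_join P Q) = (\<Sum>A\<in>P. \<Sum>B\<in>Q. - ?g (A \<inter> B))"
    unfolding part_entropy_def by (simp add: sum_negf)
  have "(\<Sum>A\<in>P. \<Sum>B\<in>Q. - ?g (A \<inter> B)) \<le> (\<Sum>A\<in>P. \<Sum>B\<in>Q.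
      - (?p A B * ln (measure M A)) - (?p A B * ln (measure M B)) + measure M A * measure M B - ?p A B)"
  proof (intro sum_mono xlnx_join)
    fix A B assume A: "A \<in> P" and B: "B \<in> Q"
    show "?p A B \<le> measure M A" "?p A B \<le> measure M B" "0 \<le> ?p A B"
      using fmpart_sets[OF P A] fmpart_sets[OF Q B] by (auto intro!: P.finite_measure_mono)
  qed
  also have "\<dots> = (\<Sum>A\<in>P. \<Sum>B\<in>Q. - (?p A B * ln (measure M A))) + (\<Sum>A\<in>P. \<Sum>B\<in>Q. - (?p A B * ln (measure M B)))
      + (\<Sum>A\<in>P. \<Sum>B\<in>Q. measure M A * measure M B) - (\<Sum>A\<in>P. \<Sum>B\<in>Q. ?p A B)"
    by (simp add: sum.distrib sum_subtractf sum_negf)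
  also have "(\<Sum>A\<in>P. \<Sum>B\<in>Q. - (?p A B * ln (measure M A))) = part_entropy M P"
  proof -
    have "(\<Sum>A\<in>P. \<Sum>B\<in>Q. - (?p A B * ln (measure M A))) = (\<Sum>A\<in>P. - ((\<Sum>B\<in>Q. ?p A B) * ln (measure M A)))"
      by (simp add: sum_distrib_right sum_negf)
    also have "\<dots> = (\<Sum>A\<in>P. - (measure M A * ln (measure M A)))"
      using measure_cells[OF Q fmpart_sets[OF P]] by simp
    finally show ?thesis unfolding part_entropy_def by (simp add: sum_negf)
  qed
  also have "(\<Sum>A\<in>P. \<Sum>B\<in>Q. - (?p A B * ln (measure M B))) = part_entropy M Q"
  proof -
    have "(\<Sum>A\<in>P. \<Sum>B\<in>Q. - (?p A B * ln (measure M B))) = (\<Sum>B\<in>Q. \<Sum>A\<in>P. - (?p A B * ln (measure M B)))"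
      by (rule sum.swap)
    also have "\<dots> = (\<Sum>B\<in>Q. - ((\<Sum>A\<in>P. measure M (B \<inter> A)) * ln (measure M B)))"
      by (simp add: sum_distrib_right sum_negf Int_commute)
    also have "\<dots> = (\<Sum>B\<in>Q. - (measure M B * ln (measure M B)))"
      using measure_cells[OF P fmpart_sets[OF Q]] by simp
    finally show ?thesis unfolding part_entropy_def by (simp add: sum_negf)
  qed
  also have "(\<Sum>A\<in>P. \<Sum>B\<in>Q. measure M A * measure M B) = 1"
    using measure_cells_1[OF P] measure_cells_1[OF Q] by (simp add: sum_product[symmetric])
  also have "(\<Sum>A\<in>P. \<Sum>B\<in>Q. ?p A B) = 1"
    using measure_cells_1[OF P] measure_cells[OF Q fmpart_sets[OF P]] by simp
  finally show ?thesis using j by simp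
qed

end



lemma coarser_refl: "coarser P P" unfolding coarser_def by auto
lemma coarser_trans: assumes "coarser P Q" "coarser Q R" shows "coarser P R"
  unfolding coarser_def
proof
  fix C assume "C \<in> R"
  then obtain B where B: "B \<in> Q" "C \<subseteq> B" using assms(2) unfolding coarser_def by auto
  then obtain A where A: "A \<in> P" "B \<subseteq> A" using assms(1) unfolding coarser_def by auto
  show "\<exists>A\<in>P. C \<subseteq> A" using A B by blast
qed
lemma coarser_join_left: "coarser P (part_join P Q)"
  unfolding coarser_def part_join_def by auto
lemma coarser_join_right: "coarser Q (part_join P Q)"
  unfolding coarser_def part_join_def by auto
lemma coarser_join_mono: "coarser P P' \<Longrightarrow> coarser Q Q' \<Longrightarrow> coarser (part_join P Q) (part_join P' Q')"
proof -
  assume p: "coarser P P'" and q: "coarser Q Q'"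
  show ?thesis unfolding coarser_def
  proof
    fix C assume "C \<in> part_join P' Q'"
    then obtain A B where AB: "A \<in> P'" "B \<in> Q'" "C = A \<inter> B" unfolding part_join_def by blast
    obtain X where X: "X \<in> P" "A \<subseteq> X" using p AB unfolding coarser_def by auto
    obtain Y where Y: "Y \<in> Q" "B \<subseteq> Y" using q AB unfolding coarser_def by auto
    have "X \<inter> Y \<in> part_join P Q" using X Y unfolding part_join_def by blast
    then show "\<exists>D\<in>part_join P Q. C \<subseteq> D" using AB X Y by blast
  qed
qed
lemma coarser_pre_mono: assumes "coarser P Q" shows "coarser (part_pre M g P) (part_pre M g Q)"
  unfolding coarser_def
proof
  fix C assume "C \<in> part_pre M g Q"
  then obtain B where B: "B \<in> Q" "C = g -` B \<inter> space M" unfolding part_pre_def by blast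
  then obtain A where A: "A \<in> P" "B \<subseteq> A" using assms unfolding coarser_def by auto
  have "g -` A \<inter> space M \<in> part_pre M g P" using A unfolding part_pre_def by blast
  moreover have "C \<subseteq> g -` A \<inter> space M" using A B by auto
  ultimately show "\<exists>D\<in>part_pre M g P. C \<subseteq> D" by blast
qed

lemma join_upto_mono: "(\<And>i. i < n \<Longrightarrow> coarser (Q i) (Q' i)) \<Longrightarrow> coarser (join_upto M n Q) (join_upto M n Q')"
proof (induction n)
  case 0 show ?case by (simp add: coarser_refl)
next
  case (Suc n)
  have "coarser (join_upto M n Q) (join_upto M n Q')" by (rule Suc.IH) (use Suc.prems in auto)
  moreover have "coarser (Q n) (Q' n)" using Suc.prems by auto
  ultimately show ?case unfolding join_upto.simps by (rule coarser_join_mono)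
qed

lemma join_upto_greatest:
  "(\<And>C. C \<in> R \<Longrightarrow> C \<subseteq> space M) \<Longrightarrow> (\<And>i. i < n \<Longrightarrow> coarser (Q i) R) \<Longrightarrow> coarser (join_upto M n Q) R"
proof (induction n)
  case 0 then show ?case unfolding coarser_def by auto
next
  case (Suc n)
  have a1: "coarser (join_upto M n Q) R" by (rule Suc.IH) (use Suc.prems in auto)
  have a2: "coarser (Q n) R" using Suc.prems by auto
  show ?case unfolding coarser_def
  proof (intro ballI)
    fix A assume A: "A \<in> R"
    obtain X where X: "X \<in> join_upto M n Q" "A \<subseteq> X" using a1 A unfolding coarser_def by auto
    obtain Y where Y: "Y \<in> Q n" "A \<subseteq> Y" using a2 A unfolding coarser_def by auto
    have "X \<inter> Y \<in> join_upto M (Suc n) Q" using X Y unfolding join_upto.simps part_join_def by blast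
    moreover have "A \<subseteq> X \<inter> Y" using X Y by auto
    ultimately show "\<exists>B\<in>join_upto M (Suc n) Q. A \<subseteq> B" by blast
  qed
qed

lemma coarser_join_upto: "i < n \<Longrightarrow> coarser (Q i) (join_upto M n Q)"
proof (induction n)
  case 0 then show ?case by simp
next
  case (Suc n)
  show ?case
  proof (cases "i < n")
    case True then show ?thesis using Suc by (auto intro: coarser_trans coarser_join_left)
  next
    case False then have "i = n" using Suc by simp
    then show ?thesis by (simp add: coarser_join_right)
  qed
qed

lemma card_join: assumes "finite P" "finite Q" shows "card (part_join P Q) \<le> card P * card Q"
proof -
  have "card (part_join P Q) \<le> card (P \<times> Q)" unfolding part_join_image by (rule card_image_le) (use assms in simp)
  also have "card (P \<times> Q) = card P * card Q" by (rule card_cartesian_product)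
  finally show ?thesis .
qed

lemma compo_const: "compo (\<lambda>_. f) k i = f ^^ i"
  by (induction i) auto

context
  fixes M :: "'a measure"
  assumes ps: "prob_space M"
begin

lemma fmpart_space: "fmpart M {space M}"
  unfolding fmpart_def disjoint_def by auto

lemma fmpart_join_upto: "(\<And>i. i < n \<Longrightarrow> fmpart M (Q i)) \<Longrightarrow> fmpart M (join_upto M n Q)"
  by (induction n) (auto intro: fmpart_join[OF ps] fmpart_space)

lemma card_join_upto:
  "(\<And>i. i < n \<Longrightarrow> fmpart M (Q i)) \<Longrightarrow> (\<And>i. i < n \<Longrightarrow> card (Q i) \<le> B) \<Longrightarrow> card (join_upto M n Q) \<le> B ^ n"
proof (induction n)
  case 0 then show ?case by simp
next
  case (Suc n)
  have "card (join_upto M (Suc n) Q) \<le> card (join_upto M n Q) * card (Q n)"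
    using Suc.prems fmpart_join_upto[of n Q] by (auto intro!: card_join simp: fmpart_def)
  also have "\<dots> \<le> B ^ n * B" using Suc by (intro mult_mono) auto
  finally show ?case by (simp add: mult.commute)
qed

lemma card_coarser:
  assumes Q: "fmpart M Q" and P: "fmpart M P" and c: "coarser Q P"
  shows "card Q \<le> card P + 1"
proof -
  define h where "h = (\<lambda>A. SOME B. B \<in> Q \<and> A \<subseteq> B)"
  have h: "h A \<in> Q \<and> A \<subseteq> h A" if "A \<in> P" for A
    unfolding h_def by (rule someI_ex) (use c that in \<open>auto simp: coarser_def\<close>)
  have "Q \<subseteq> insert {} (h ` P)"
  proof
    fix B assume B: "B \<in> Q"
    show "B \<in> insert {} (h ` P)"
    proof (cases "B = {}")
      case False
      then obtain x where x: "x \<in> B" by auto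
      then have "x \<in> space M" using fmpart_sub[OF ps Q B] by auto
      then obtain A where A: "A \<in> P" "x \<in> A" using P unfolding fmpart_def by auto
      then have "x \<in> h A" "h A \<in> Q" using h by auto
      then have "h A = B" using fmpart_disj[OF ps Q _ B] x by blast
      then show ?thesis using A by auto
    qed simp
  qed
  then have "card Q \<le> card (insert {} (h ` P))"
    using P by (intro card_mono) (auto simp: fmpart_def)
  also have "\<dots> \<le> Suc (card (h ` P))" by (simp add: card_insert_le_m1 card_insert_if)
  also have "\<dots> \<le> Suc (card P)" using card_image_le P by (auto simp: fmpart_def)
  finally show ?thesis by simp
qed

lemma fmpart_pre:
  assumes g: "g \<in> M \<rightarrow>\<^sub>M M" and P: "fmpart M P"
  shows "fmpart M (part_pre M g P)"
proof -
  have im: "part_pre M g P = (\<lambda>A. g -` A \<inter> space M) ` P" unfolding part_pre_def by auto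
  have gs: "x \<in> space M \<Longrightarrow> g x \<in> space M" for x using g by (simp add: measurable_space)
  show ?thesis unfolding fmpart_def
  proof (intro conjI)
    show "finite (part_pre M g P)" using P unfolding im fmpart_def by auto
    show "part_pre M g P \<subseteq> sets M" using fmpart_sets[OF ps P] g unfolding im by (auto intro: measurable_sets)
    show "disjoint (part_pre M g P)" unfolding disjoint_def im
    proof (intro ballI impI)
      fix X Y assume X: "X \<in> (\<lambda>A. g -` A \<inter> space M) ` P" and Y: "Y \<in> (\<lambda>A. g -` A \<inter> space M) ` P" and ne: "X \<noteq> Y"
      obtain A where A: "A \<in> P" "X = g -` A \<inter> space M" using X by auto
      obtain B where B: "B \<in> P" "Y = g -` B \<inter> space M" using Y by auto
      have "A \<noteq> B" using A B ne by auto
      then have "A \<inter> B = {}" using fmpart_disj[OF ps P A(1) B(1)] by simp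
      then show "X \<inter> Y = {}" using A B by auto
    qed
    have "\<Union>(part_pre M g P) = g -` (\<Union>P) \<inter> space M" unfolding im by auto
    also have "\<dots> = space M" using P gs unfolding fmpart_def by auto
    finally show "\<Union>(part_pre M g P) = space M" .
  qed
qed

lemma entropy_pre:
  assumes g: "g \<in> M \<rightarrow>\<^sub>M M" and pres: "\<And>A. A \<in> sets M \<Longrightarrow> measure M (g -` A \<inter> space M) = measure M A"
    and P: "fmpart M P"
  shows "part_entropy M (part_pre M g P) = part_entropy M P"
proof -
  have im: "part_pre M g P = (\<lambda>A. g -` A \<inter> space M) ` P" unfolding part_pre_def by auto
  let ?g = "\<lambda>C. measure M C * ln (measure M C)"
  have "(\<Sum>C\<in>part_pre M g P. ?g C) = (\<Sum>A\<in>P. ?g (g -` A \<inter> space M))"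
    unfolding im
  proof (subst sum.reindex_nontrivial)
    show "finite P" using P by (simp add: fmpart_def)
  next
    fix A B assume AB: "A \<in> P" "B \<in> P" "A \<noteq> B" "g -` A \<inter> space M = g -` B \<inter> space M"
    then have "A \<inter> B = {}" using fmpart_disj[OF ps P] by auto
    then have "g -` A \<inter> space M = {}" using AB by auto
    then show "?g (g -` A \<inter> space M) = 0" by simp
  qed (simp add: comp_def)
  also have "\<dots> = (\<Sum>A\<in>P. ?g A)" using pres fmpart_sets[OF ps P] by simp
  finally show ?thesis unfolding part_entropy_def by simp
qed

lemma pre_pre:
  assumes h: "\<And>x. x \<in> space M \<Longrightarrow> h x \<in> space M"
  shows "part_pre M h (part_pre M g P) = part_pre M (g \<circ> h) P"
proof -
  have e: "(g \<circ> h) -` A \<inter> space M = h -` (g -` A \<inter> space M) \<inter> space M" for A using h by auto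
  show ?thesis unfolding part_pre_def e by blast
qed

lemma pre_join:
  shows "part_pre M h (part_join P Q) = part_join (part_pre M h P) (part_pre M h Q)"
proof (intro set_eqI iffI)
  fix C assume "C \<in> part_pre M h (part_join P Q)"
  then obtain A B where AB: "A \<in> P" "B \<in> Q" "C = h -` (A \<inter> B) \<inter> space M"
    unfolding part_pre_def part_join_def by blast
  have "h -` A \<inter> space M \<in> part_pre M h P" "h -` B \<inter> space M \<in> part_pre M h Q"
    using AB unfolding part_pre_def by blast+
  moreover have "C = (h -` A \<inter> space M) \<inter> (h -` B \<inter> space M)" using AB by auto
  ultimately show "C \<in> part_join (part_pre M h P) (part_pre M h Q)" unfolding part_join_def by blast
next
  fix C assume "C \<in> part_join (part_pre M h P) (part_pre M h Q)"
  then obtain A B where AB: "A \<in> P" "B \<in> Q" "C = (h -` A \<inter> space M) \<inter> (h -` B \<inter> space M)"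
    unfolding part_pre_def part_join_def by blast
  have "A \<inter> B \<in> part_join P Q" using AB unfolding part_join_def by blast
  moreover have "C = h -` (A \<inter> B) \<inter> space M" using AB by auto
  ultimately show "C \<in> part_pre M h (part_join P Q)" unfolding part_pre_def by blast
qed

lemma pre_join_upto:
  assumes h: "\<And>x. x \<in> space M \<Longrightarrow> h x \<in> space M"
  shows "part_pre M h (join_upto M n Q) = join_upto M n (\<lambda>j. part_pre M h (Q j))"
proof (induction n)
  case 0 then show ?case unfolding part_pre_def using h by auto
next
  case (Suc n) then show ?case by (simp add: pre_join)
qed

end




definition itj :: "'a measure \<Rightarrow> ('a \<Rightarrow> 'a) \<Rightarrow> 'a set set \<Rightarrow> nat \<Rightarrow> 'a set set" where
  "itj M f P n = join_upto M n (\<lambda>i. part_pre M (f ^^ i) P)"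

lemma dyn_join_const: "dyn_join M (\<lambda>_. f) Ps k m = join_upto M m (\<lambda>i. part_pre M (f ^^ i) (Ps (k + i)))"
  unfolding dyn_join_def by (simp add: compo_const)

lemma card_pre: "finite P \<Longrightarrow> card (part_pre M g P) \<le> card P"
proof -
  assume "finite P"
  moreover have "part_pre M g P = (\<lambda>A. g -` A \<inter> space M) ` P" unfolding part_pre_def by auto
  ultimately show ?thesis by (simp add: card_image_le)
qed

context
  fixes M :: "'a measure" and f :: "'a \<Rightarrow> 'a"
  assumes ps: "prob_space M" and fm: "f \<in> M \<rightarrow>\<^sub>M M" and inv: "distr M M f = M"
begin

interpretation P: prob_space M by (rule ps)

lemma f_space: "x \<in> space M \<Longrightarrow> f x \<in> space M"
  using fm by (rule measurable_space)

lemma funpow_meas: "f ^^ i \<in> M \<rightarrow>\<^sub>M M"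
proof (induction i)
  case 0 show ?case using measurable_id[of M] by (simp add: id_def)
next
  case (Suc i) show ?case unfolding funpow.simps by (rule measurable_comp[OF Suc fm])
qed

lemma funpow_space: "x \<in> space M \<Longrightarrow> (f ^^ i) x \<in> space M"
  using funpow_meas by (rule measurable_space)

lemma f_pres: "A \<in> sets M \<Longrightarrow> measure M (f -` A \<inter> space M) = measure M A"
  using measure_distr[OF fm, of A] inv by simp

lemma funpow_pres: "A \<in> sets M \<Longrightarrow> measure M ((f ^^ i) -` A \<inter> space M) = measure M A"
proof (induction i)
  case 0 show ?case using sets.sets_into_space[OF 0] by (simp add: Int_absorb2)
next
  case (Suc i)
  have "(f ^^ Suc i) -` A \<inter> space M = f -` ((f ^^ i) -` A \<inter> space M) \<inter> space M"
    unfolding funpow_Suc_right using f_space by auto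
  also have "measure M \<dots> = measure M ((f ^^ i) -` A \<inter> space M)"
    by (rule f_pres) (rule measurable_sets[OF funpow_meas Suc.prems])
  also have "\<dots> = measure M A" using Suc by simp
  finally show ?case .
qed

lemma fmpart_itj: "fmpart M P \<Longrightarrow> fmpart M (itj M f P n)"
  unfolding itj_def by (intro fmpart_join_upto[OF ps] fmpart_pre[OF ps funpow_meas])

lemma itj_shift: "part_pre M (f ^^ n) (itj M f P m) = join_upto M m (\<lambda>j. part_pre M (f ^^ (j + n)) P)"
  unfolding itj_def by (simp add: pre_join_upto[OF ps funpow_space] pre_pre[OF ps funpow_space] funpow_add)

lemma subadd:
  assumes P: "fmpart M P"
  shows "part_entropy M (itj M f P (n + m)) \<le> part_entropy M (itj M f P n) + part_entropy M (itj M f P m)"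
proof -
  let ?R = "part_join (itj M f P n) (part_pre M (f ^^ n) (itj M f P m))"
  have fR: "fmpart M ?R" by (intro fmpart_join[OF ps] fmpart_itj P fmpart_pre[OF ps funpow_meas])
  have c: "coarser (itj M f P (n + m)) ?R"
    unfolding itj_def[of M f P "n+m"]
  proof (rule join_upto_greatest)
    show "C \<subseteq> space M" if "C \<in> ?R" for C using fmpart_sub[OF ps fR that] .
  next
    fix i assume i: "i < n + m"
    show "coarser (part_pre M (f ^^ i) P) ?R"
    proof (cases "i < n")
      case True
      have "coarser (part_pre M (f ^^ i) P) (itj M f P n)"
        unfolding itj_def using coarser_join_upto[OF True, of "\<lambda>i. part_pre M (f ^^ i) P" M] by simp
      then show ?thesis using coarser_join_left coarser_trans by blast
    next
      case False
      then obtain j where j: "i = j + n" "j < m" using i by (metis add.commute le_Suc_ex not_less add_less_cancel_left)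
      have "coarser (part_pre M (f ^^ (j + n)) P) (part_pre M (f ^^ n) (itj M f P m))"
        unfolding itj_shift using coarser_join_upto[OF j(2), of "\<lambda>j. part_pre M (f ^^ (j + n)) P" M] by simp
      then show ?thesis unfolding j(1) using coarser_join_right coarser_trans by blast
    qed
  qed
  have "part_entropy M (itj M f P (n + m)) \<le> part_entropy M ?R"
    by (rule entropy_mono[OF ps fmpart_itj[OF P] fR c])
  also have "\<dots> \<le> part_entropy M (itj M f P n) + part_entropy M (part_pre M (f ^^ n) (itj M f P m))"
    by (intro entropy_join[OF ps] fmpart_itj P fmpart_pre[OF ps funpow_meas])
  also have "part_entropy M (part_pre M (f ^^ n) (itj M f P m)) = part_entropy M (itj M f P m)"
    by (intro entropy_pre[OF ps funpow_meas] funpow_pres fmpart_itj P)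
  finally show ?thesis .
qed

lemma itj_conv: "fmpart M P \<Longrightarrow> convergent (\<lambda>n. part_entropy M (itj M f P n) / real n)"
  by (rule fekete) (auto intro: entropy_nonneg[OF ps] subadd)

lemma itj_bound:
  assumes Q: "fmpart M Q"
  shows "coarser (join_upto M n (\<lambda>i. part_pre M (f ^^ i) (itj M f Q m))) (itj M f Q (n + m))"
proof (rule join_upto_greatest)
  show "C \<subseteq> space M" if "C \<in> itj M f Q (n + m)" for C using fmpart_sub[OF ps fmpart_itj[OF Q] that] .
next
  fix i assume i: "i < n"
  show "coarser (part_pre M (f ^^ i) (itj M f Q m)) (itj M f Q (n + m))"
    unfolding itj_shift
  proof (rule join_upto_greatest)
    show "C \<subseteq> space M" if "C \<in> itj M f Q (n + m)" for C using fmpart_sub[OF ps fmpart_itj[OF Q] that] .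
  next
    fix j assume j: "j < m"
    have "j + i < n + m" using i j by simp
    then show "coarser (part_pre M (f ^^ (j + i)) Q) (itj M f Q (n + m))"
      unfolding itj_def by (rule coarser_join_upto)
  qed
qed

end



definition E1 :: "'a measure \<Rightarrow> ('a \<Rightarrow> 'a) \<Rightarrow> (nat \<Rightarrow> 'a set set) set" where
  "E1 M f = {Ps. (\<forall>n. fmpart M (Ps n)) \<and> (\<exists>B::nat. \<forall>n. card (Ps n) \<le> B) \<and>
      (\<exists>Q m. fmpart M Q \<and> (\<forall>n. coarser (Ps n) (itj M f Q m)))}"

context
  fixes M :: "'a measure" and f :: "'a \<Rightarrow> 'a"
  assumes ps: "prob_space M" and fm: "f \<in> M \<rightarrow>\<^sub>M M" and inv: "distr M M f = M"
begin

lemma F_E1: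
  assumes P: "fmpart M P" shows "(\<lambda>_. P) \<in> E1 M f"
proof -
  have c1: "coarser P (part_pre M (f ^^ 0) P)" unfolding coarser_def
  proof
    fix C assume "C \<in> part_pre M (f ^^ 0) P"
    then obtain A where A: "A \<in> P" "C = (f ^^ 0) -` A \<inter> space M" unfolding part_pre_def by blast
    then have "C \<subseteq> A" by auto
    then show "\<exists>A\<in>P. C \<subseteq> A" using A by blast
  qed
  have c2: "coarser (part_pre M (f ^^ 0) P) (itj M f P 1)"
    unfolding itj_def using coarser_join_upto[of 0 1 "\<lambda>i. part_pre M (f ^^ i) P" M] by simp
  have c: "coarser P (itj M f P 1)" by (rule coarser_trans[OF c1 c2])
  show ?thesis unfolding E1_def using P c by auto
qed

lemma E1_adm: "admissible M (\<lambda>_. f) (E1 M f)"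
  unfolding admissible_def
proof (intro conjI)
  show "E1 M f \<noteq> {}" using F_E1[OF fmpart_space[OF ps]] by auto
  show "\<forall>Ps\<in>E1 M f. \<forall>n. fmpart M (Ps n)" by (auto simp: E1_def)
  show "\<forall>Ps\<in>E1 M f. \<exists>B. \<forall>n. card (Ps n) \<le> B" by (auto simp: E1_def)
  show "\<forall>Ps\<in>E1 M f. \<forall>Qs. (\<forall>n. fmpart M (Qs n) \<and> coarser (Qs n) (Ps n)) \<longrightarrow> Qs \<in> E1 M f"
  proof (intro ballI allI impI)
    fix Ps Qs assume Ps: "Ps \<in> E1 M f" and Qs: "\<forall>n. fmpart M (Qs n) \<and> coarser (Qs n) (Ps n)"
    from Ps obtain B Q m where fP: "\<forall>n. fmpart M (Ps n)" and B: "\<forall>n. card (Ps n) \<le> B"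
      and Q: "fmpart M Q" and c: "\<forall>n. coarser (Ps n) (itj M f Q m)"
      unfolding E1_def by blast
    have "card (Qs n) \<le> B + 1" for n
      using card_coarser[OF ps, of "Qs n" "Ps n"] Qs fP B by (metis add_le_mono1 order_trans)
    moreover have "coarser (Qs n) (itj M f Q m)" for n using Qs c coarser_trans by blast
    ultimately show "Qs \<in> E1 M f" unfolding E1_def using Qs Q by blast
  qed
  show "\<forall>Ps\<in>E1 M f. \<forall>m\<ge>1. (\<lambda>k. dyn_join M (\<lambda>_. f) Ps k m) \<in> E1 M f"
  proof (intro ballI allI impI)
    fix Ps and m' :: nat assume Ps: "Ps \<in> E1 M f" and "m' \<ge> 1"
    from Ps obtain B Q m where fP: "\<forall>n. fmpart M (Ps n)" and B: "\<forall>n. card (Ps n) \<le> B"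
      and Q: "fmpart M Q" and c: "\<forall>n. coarser (Ps n) (itj M f Q m)"
      unfolding E1_def by blast
    let ?X = "\<lambda>k. join_upto M m' (\<lambda>i. part_pre M (f ^^ i) (Ps (k + i)))"
    have fX: "fmpart M (?X k)" for k
      using fP by (intro fmpart_join_upto[OF ps] fmpart_pre[OF ps funpow_meas[OF ps fm inv]]) auto
    have cX: "card (?X k) \<le> B ^ m'" for k
    proof (rule card_join_upto[OF ps])
      fix i show "fmpart M (part_pre M (f ^^ i) (Ps (k + i)))"
        using fP by (intro fmpart_pre[OF ps funpow_meas[OF ps fm inv]]) auto
      have "card (part_pre M (f ^^ i) (Ps (k + i))) \<le> card (Ps (k + i))"
        using fP by (intro card_pre) (auto simp: fmpart_def)
      then show "card (part_pre M (f ^^ i) (Ps (k + i))) \<le> B" using B order_trans by blast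
    qed
    have ccX: "coarser (?X k) (itj M f Q (m' + m))" for k
    proof (rule coarser_trans[OF _ itj_bound[OF ps fm inv Q]])
      show "coarser (?X k) (join_upto M m' (\<lambda>i. part_pre M (f ^^ i) (itj M f Q m)))"
        using c by (intro join_upto_mono coarser_pre_mono) auto
    qed
    show "(\<lambda>k. dyn_join M (\<lambda>_. f) Ps k m') \<in> E1 M f"
      unfolding dyn_join_const E1_def using fX cX ccX Q by blast
  qed
qed

lemma seq_eq:
  assumes P: "fmpart M P"
  shows "na_entropy_seq M (\<lambda>_. f) (\<lambda>_. P) = ereal (ks_entropy_part M f P)"
proof -
  have conv: "(\<lambda>n. part_entropy M (join_upto M n (\<lambda>i. part_pre M (f ^^ i) P)) / real n)
      \<longlonglongrightarrow> ks_entropy_part M f P"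
    using itj_conv[OF ps fm inv P] unfolding itj_def ks_entropy_part_def convergent_LIMSEQ_iff .
  show ?thesis unfolding na_entropy_seq_def dyn_join_const
    using lim_imp_Limsup[OF trivial_limit_sequentially tendsto_ereal[OF conv]] by simp
qed

lemma seq_le:
  assumes Ps: "Ps \<in> E1 M f"
  shows "na_entropy_seq M (\<lambda>_. f) Ps \<le> ks_entropy M f"
proof -
  from Ps obtain Q m where fP: "\<forall>n. fmpart M (Ps n)"
      and Q: "fmpart M Q" and c: "\<forall>n. coarser (Ps n) (itj M f Q m)"
      unfolding E1_def by blast
  define a where "a n = part_entropy M (itj M f Q n)" for n
  have conv: "(\<lambda>n. a n / real n) \<longlonglongrightarrow> ks_entropy_part M f Q"
    using itj_conv[OF ps fm inv Q] unfolding a_def itj_def ks_entropy_part_def convergent_LIMSEQ_iff .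
  have le: "part_entropy M (dyn_join M (\<lambda>_. f) Ps 0 n) / real n \<le> a n / real n + a m / real n" for n
  proof -
    let ?X = "join_upto M n (\<lambda>i. part_pre M (f ^^ i) (Ps i))"
    have eq: "dyn_join M (\<lambda>_. f) Ps 0 n = ?X" by (simp add: dyn_join_const)
    have fX: "fmpart M ?X"
      using fP by (intro fmpart_join_upto[OF ps] fmpart_pre[OF ps funpow_meas[OF ps fm inv]]) auto
    have "coarser ?X (join_upto M n (\<lambda>i. part_pre M (f ^^ i) (itj M f Q m)))"
      using c by (intro join_upto_mono coarser_pre_mono) auto
    then have "coarser ?X (itj M f Q (n + m))" using itj_bound[OF ps fm inv Q] coarser_trans by blast
    then have "part_entropy M ?X \<le> a (n + m)" unfolding a_def
      by (rule entropy_mono[OF ps fX fmpart_itj[OF ps fm inv Q]])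
    also have "\<dots> \<le> a n + a m" unfolding a_def by (rule subadd[OF ps fm inv Q])
    finally have "part_entropy M ?X / real n \<le> (a n + a m) / real n" by (rule divide_right_mono) simp
    then show ?thesis unfolding eq by (simp add: add_divide_distrib)
  qed
  have "na_entropy_seq M (\<lambda>_. f) Ps \<le> limsup (\<lambda>n. ereal (a n / real n + a m / real n))"
    unfolding na_entropy_seq_def using le by (intro Limsup_mono) auto
  also have "\<dots> = ereal (ks_entropy_part M f Q + 0)"
    by (intro lim_imp_Limsup trivial_limit_sequentially tendsto_ereal tendsto_add conv lim_const_over_n)
  also have "\<dots> \<le> ks_entropy M f" unfolding ks_entropy_def using Q by simp (rule SUP_upper, simp)
  finally show ?thesis .
qed

end

theorem mainTheorem12:
  fixes M :: "'a measure" and f :: "'a \<Rightarrow> 'a"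
  assumes "prob_space M"
    and "f \<in> M \<rightarrow>\<^sub>M M"
    and "distr M M f = M"
  shows "na_entropy_class M (\<lambda>_. f)
           (gen_class M (\<lambda>_. f) {(\<lambda>_. P) | P. fmpart M P}) = ks_entropy M f"
proof -
  let ?F = "{(\<lambda>_. P) | P. fmpart M P}"
  let ?G = "gen_class M (\<lambda>_. f) ?F"
  have FG: "(\<lambda>_. P) \<in> ?G" if "fmpart M P" for P
    unfolding gen_class_def using that by (intro InterI) auto
  have FE: "?F \<subseteq> E1 M f" using F_E1[OF assms] by auto
  have GE: "?G \<subseteq> E1 M f" unfolding gen_class_def
    by (rule Inter_lower) (use E1_adm[OF assms] FE in simp)
  have le: "na_entropy_class M (\<lambda>_. f) ?G \<le> ks_entropy M f"
    unfolding na_entropy_class_def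
    by (rule SUP_least) (use GE seq_le[OF assms] in blast)
  have ge: "ks_entropy M f \<le> na_entropy_class M (\<lambda>_. f) ?G"
    unfolding ks_entropy_def
  proof (rule SUP_least)
    fix P assume "P \<in> {P. fmpart M P}"
    then have P: "fmpart M P" by simp
    have "ereal (ks_entropy_part M f P) = na_entropy_seq M (\<lambda>_. f) (\<lambda>_. P)" using seq_eq[OF assms P] ..
    also have "\<dots> \<le> na_entropy_class M (\<lambda>_. f) ?G"
      unfolding na_entropy_class_def using FG[OF P] by (rule SUP_upper)
    finally show "ereal (ks_entropy_part M f P) \<le> na_entropy_class M (\<lambda>_. f) ?G" .
  qed
  show ?thesis using le ge by (rule antisym)
qed



end
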